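(* Let $\Omega\subseteq\mathbb R^N$ be convex and let $K\in L^\infty(\Omega\times B_1)\cap C^1(\Omega\times(B_1\setminus\{0\}))$ satisfy $|D_xK(x,y)|+|D_yK(x,y)|\le\Lambda|y|^{-1}$ for all $(x,y)\in\Omega\times(B_1\setminus\{0\})$. Then $L_K$ is $1$-regular (with a constant depending only on $N$, $\Lambda$ and $\|K\|_{L^\infty}$).
   Context: $\ell(\rho):=|\ln(\min\{\rho,1/10\})|^{-1}$ for $\rho>0$. $L_K$ is $\alpha$-regular with constant $\Lambda_0$ if, with $K$ extended by zero to $\Omega\times(\mathbb R^N\setminus B_1)$, for all $z,w$ with $z\pm\frac w2\in\Omega$: $\int_{\mathbb R^N\setminus B_{2|w|}}\Big|\frac{K(z+\frac w2,\xi+\frac w2)}{|\xi+\frac w2|^N}-\frac{K(z-\frac w2,\xi-\frac w2)}{|\xi-\frac w2|^N}\Big|\ell(|\xi|)\,d\xi\le\Lambda_0\ell^\alpha(|w|)$. Here $B_r$ is the open ball of radius $r$ centered at $0$. *)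

theory Defs
  imports "HOL-Analysis.Analysis"
begin

definition ell :: "real \<Rightarrow> real" where
  "ell \<rho> = inverse \<bar>ln (min \<rho> (1/10))\<bar>"

definition Kext :: "('a::euclidean_space \<Rightarrow> 'a \<Rightarrow> real) \<Rightarrow> 'a \<Rightarrow> 'a \<Rightarrow> real" where
  "Kext K x y = (if norm y < 1 then K x y else 0)"

definition alpha_regular ::
  "'a::euclidean_space set \<Rightarrow> ('a \<Rightarrow> 'a \<Rightarrow> real) \<Rightarrow> real \<Rightarrow> real \<Rightarrow> bool" where
  "alpha_regular \<Omega> K \<alpha> \<Lambda>0 \<longleftrightarrow>
    (\<forall>z w. z + w /\<^sub>R 2 \<in> \<Omega> \<and> z - w /\<^sub>R 2 \<in> \<Omega> \<longrightarrow>
      (\<integral>\<^sup>+ \<xi> \<in> - ball 0 (2 * norm w).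
          ennreal (\<bar>Kext K (z + w /\<^sub>R 2) (\<xi> + w /\<^sub>R 2) / norm (\<xi> + w /\<^sub>R 2) ^ DIM('a)
                  - Kext K (z - w /\<^sub>R 2) (\<xi> - w /\<^sub>R 2) / norm (\<xi> - w /\<^sub>R 2) ^ DIM('a)\<bar>
                  * ell (norm \<xi>)) \<partial>lborel)
      \<le> ennreal (\<Lambda>0 * ell (norm w) powr \<alpha>))"

end

theory Submission
  imports Defs
begin


lemma ln10_gt2: "2 < ln (10::real)"
proof -
  have "exp (1::real) < 3" using e_less_272 by simp
  then have "exp 1 * exp 1 < (3::real) * 3" by (intro mult_strict_mono) auto
  then have "exp (2::real) < 10" by (simp add: exp_add[symmetric])
  then show ?thesis by (metis exp_gt_zero ln_exp ln_less_cancel_iff zero_less_numeral)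
qed

lemma ell_pos_form: "0 < x \<Longrightarrow> ell x = 1 / (- ln (min x (1/10))) \<and> ln 10 \<le> - ln (min x (1/10))"
proof -
  assume x: "0 < x"
  have m: "0 < min x (1/10)" "min x (1/10) \<le> 1/10" using x by auto
  have "ln (min x (1/10)) \<le> ln (1/10)" using m by simp
  also have "ln (1/10::real) = - ln 10" by (simp add: ln_div)
  finally have "ln 10 \<le> - ln (min x (1/10))" by simp
  moreover have "ln (min x (1/10)) < 0" using ln10_gt2 \<open>ln (min x (1/10)) \<le> ln (1/10)\<close> \<open>ln (1/10::real) = - ln 10\<close> by linarith
  ultimately have "\<bar>ln (min x (1/10))\<bar> = - ln (min x (1/10))" by linarith
  then have "ell x = 1 / (- ln (min x (1/10)))" unfolding ell_def by (metis inverse_eq_divide)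
  then show ?thesis using \<open>ln 10 \<le> - ln (min x (1/10))\<close> by blast
qed

lemma ell_nonneg: "0 \<le> ell x" by (simp add: ell_def)

lemma ell_pos: "0 < x \<Longrightarrow> 0 < ell x"
  using ell_pos_form[of x] ln10_gt2 by auto

lemma ell_le_half: "0 \<le> x \<Longrightarrow> ell x \<le> 1/2"
proof (cases "0 < x")
  case True
  have L: "ell x = 1 / (- ln (min x (1/10)))" "2 < - ln (min x (1/10))"
    using ell_pos_form[OF True] ln10_gt2 by auto
  have "1 / (- ln (min x (1/10))) \<le> 1 / 2" using L(2) by (intro divide_left_mono) auto
  then show ?thesis using L by simp
next
  case False
  assume "0 \<le> x"
  then have "x = 0" using False by simp
  then show ?thesis by (simp add: ell_def)
qed

lemma ell_zero: "ell 0 = 0" by (simp add: ell_def)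

lemma ell_big: "1/10 \<le> x \<Longrightarrow> ell x = 1 / ln 10"
proof -
  assume x: "1/10 \<le> x"
  then have "min x (1/10) = 1/10" by simp
  moreover have "- ln (1/10::real) = ln 10" by (simp add: ln_div)
  ultimately show ?thesis using ell_pos_form[of x] x by simp
qed

lemma ln_le_2sqrt: "1 \<le> t \<Longrightarrow> ln t \<le> 2 * sqrt t"
proof -
  assume t: "1 \<le> t"
  have a: "ln t = 2 * ln (sqrt t)" using t by (simp add: ln_sqrt)
  have b: "ln (sqrt t) \<le> sqrt t - 1" using t by (intro ln_le_minus_one) auto
  show ?thesis using a b by linarith
qed

lemma ell_sqrt: assumes "0 < s" "s \<le> x" shows "ell x \<le> 2 * ell s * sqrt (x / s)"
proof -
  define ms mx where "ms = min s (1/10)" and "mx = min x (1/10)"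
  have es: "ell s = 1 / (- ln ms)" "ln 10 \<le> - ln ms" using ell_pos_form[of s] assms ms_def by auto
  have ex: "ell x = 1 / (- ln mx)" "ln 10 \<le> - ln mx" using ell_pos_form[of x] assms mx_def by auto
  have pos: "0 < ms" "0 < mx" using assms ms_def mx_def by auto
  have rat: "mx / ms \<le> x / s" using assms unfolding ms_def mx_def
    by (auto simp: min_def divide_simps)
  have rat1: "1 \<le> mx / ms" using assms pos unfolding ms_def mx_def by (auto simp: min_def divide_simps)
  have sq1: "1 \<le> sqrt (x/s)" using assms by simp
  have "- ln ms = - ln mx + ln (mx / ms)" using pos by (simp add: ln_div)
  also have "ln (mx/ms) \<le> ln (x/s)" using rat rat1 by simp
  also have "ln (x/s) \<le> 2 * sqrt (x/s)" using assms by (intro ln_le_2sqrt) simp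
  finally have A: "- ln ms \<le> - ln mx + 2 * sqrt (x/s)" by simp
  have B: "- ln mx + 2 * sqrt (x/s) \<le> 2 * (- ln mx) * sqrt (x/s)"
  proof -
    have "- ln mx \<le> (- ln mx) * sqrt (x/s)" using sq1 ex ln10_gt2 by (simp add: mult_le_cancel_left1)
    moreover have "2 * sqrt (x/s) \<le> (- ln mx) * sqrt (x/s)" using sq1 ex ln10_gt2
      by (intro mult_right_mono) auto
    ultimately show ?thesis by linarith
  qed
  have C: "- ln ms \<le> 2 * sqrt (x/s) * (- ln mx)" using A B by (simp add: mult_ac)
  have q0: "2 * sqrt (x/s) \<noteq> 0" using assms by simp
  have "ell x = (2 * sqrt (x/s)) / (2 * sqrt (x/s) * (- ln mx))" using ex q0 assms by simp
  also have "\<dots> \<le> (2 * sqrt (x/s)) / (- ln ms)"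
  proof (rule divide_left_mono)
    show "- ln ms \<le> 2 * sqrt (x/s) * (- ln mx)" by (rule C)
    show "0 \<le> 2 * sqrt (x/s)" using assms by simp
    have "0 < - ln ms" "0 < - ln mx" "0 < 2 * sqrt (x/s)" using es ex ln10_gt2 assms by auto
    then have "0 < - ln ms" "0 < 2 * sqrt (x/s) * (- ln mx)" using mult_pos_pos by blast+
    then show "0 < 2 * sqrt (x/s) * (- ln mx) * (- ln ms)" by (rule mult_pos_pos[rotated])
  qed
  also have "\<dots> = 2 * ell s * sqrt (x / s)" using es by simp
  finally show ?thesis .
qed

lemma ell_lin: assumes "0 < s" "s \<le> 1/10" shows "s \<le> ell s"
proof -
  have es: "ell s = 1 / (- ln s)" "ln 10 \<le> - ln s" using ell_pos_form[of s] assms by (auto simp: min_def)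
  have "- ln s = ln (1/s)" using assms by (simp add: ln_div)
  also have "\<dots> \<le> 1/s - 1" using assms by (intro ln_le_minus_one) auto
  finally have C: "- ln s \<le> 1 / s" by simp
  have P: "0 < (1/s) * (- ln s)" using assms es ln10_gt2 by (intro mult_pos_pos) auto
  have "1 / (1 / s) \<le> 1 / (- ln s)" using C P by (intro divide_left_mono) auto
  then show ?thesis using es by simp
qed



lemma pow_diff_le:
  fixes x y c :: real
  assumes "0 \<le> y" "y \<le> x" "x \<le> c"
  shows "x ^ n - y ^ n \<le> real n * (x - y) * c ^ (n - 1)"
proof (induction n)
  case 0 then show ?case by simp
next
  case (Suc n)
  have c0: "0 \<le> c" using assms by linarith
  have "x ^ Suc n - y ^ Suc n = x * (x ^ n - y ^ n) + (x - y) * y ^ n" by (simp add: algebra_simps)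
  also have "x * (x ^ n - y ^ n) \<le> c * (real n * (x - y) * c ^ (n - 1))"
  proof (rule mult_mono)
    show "x \<le> c" by fact
    show "x ^ n - y ^ n \<le> real n * (x - y) * c ^ (n - 1)" by (rule Suc.IH)
    show "0 \<le> c" by (rule c0)
    show "0 \<le> x ^ n - y ^ n" using assms by (simp add: power_mono)
  qed
  also have "(x - y) * y ^ n \<le> (x - y) * c ^ n"
    using assms by (intro mult_left_mono power_mono) auto
  also have "c * (real n * (x - y) * c ^ (n - 1)) = real n * (x - y) * c ^ n"
    by (cases n) (simp_all add: algebra_simps)
  finally have "x ^ Suc n - y ^ Suc n \<le> real n * (x - y) * c ^ n + (x - y) * c ^ n"
    by simp
  then show ?case by (simp add: algebra_simps)
qed

lemma pow_absdiff_le: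
  fixes a b c :: real
  assumes "0 \<le> a" "0 \<le> b" "a \<le> c" "b \<le> c"
  shows "\<bar>a ^ n - b ^ n\<bar> \<le> real n * \<bar>a - b\<bar> * c ^ (n - 1)"
proof (cases "b \<le> a")
  case True
  then have "a ^ n - b ^ n \<le> real n * (a - b) * c ^ (n - 1)" using assms by (intro pow_diff_le) auto
  moreover have "b ^ n \<le> a ^ n" using True assms by (simp add: power_mono)
  ultimately show ?thesis using True by simp
next
  case False
  then have "b ^ n - a ^ n \<le> real n * (b - a) * c ^ (n - 1)" using assms by (intro pow_diff_le) auto
  moreover have "a ^ n \<le> b ^ n" using False assms by (simp add: power_mono)
  ultimately show ?thesis using False by simp
qed

lemma inv_pow_diff:
  fixes a b r s :: real
  assumes r: "0 < r" and a: "r/2 \<le> a" "a \<le> 2*r" and b: "r/2 \<le> b" "b \<le> 2*r" and ab: "\<bar>a - b\<bar> \<le> s"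
    and n: "1 \<le> n"
  shows "\<bar>1 / a ^ n - 1 / b ^ n\<bar> \<le> real n * 8 ^ n * s / r ^ (n + 1)"
proof -
  have a0: "0 < a" "0 < b" using r a b by auto
  have den: "(r/2) ^ n * (r/2) ^ n \<le> a ^ n * b ^ n"
    using a b r by (intro mult_mono power_mono) auto
  have "\<bar>1 / a ^ n - 1 / b ^ n\<bar> = \<bar>b ^ n - a ^ n\<bar> / (a ^ n * b ^ n)"
    using a0 by (simp add: field_simps abs_div)
  also have "\<bar>b ^ n - a ^ n\<bar> \<le> real n * \<bar>b - a\<bar> * (2*r) ^ (n - 1)"
    using a0 a b by (intro pow_absdiff_le) auto
  also have "\<dots> \<le> real n * s * (2*r) ^ (n - 1)"
    using ab r by (intro mult_right_mono mult_left_mono) auto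
  finally have "\<bar>1 / a ^ n - 1 / b ^ n\<bar> \<le> real n * s * (2*r) ^ (n - 1) / (a ^ n * b ^ n)"
    using a0 by (simp add: divide_right_mono)
  also have "real n * s * (2*r) ^ (n - 1) / (a ^ n * b ^ n) \<le> real n * s * (2*r) ^ (n - 1) / ((r/2) ^ n * (r/2) ^ n)"
    using r ab den a0 by (intro divide_left_mono) (auto intro!: mult_nonneg_nonneg mult_pos_pos)
  also have "real n * s * (2*r) ^ (n - 1) / ((r/2) ^ n * (r/2) ^ n) = real n * s * 2 ^ (n - 1) * 4 ^ n / r ^ (n + 1)"
  proof -
    obtain m where m: "n = Suc m" using n by (cases n) auto
    have f4: "(4::real)^m = 2^m * 2^m" by (simp add: power_mult_distrib[symmetric])
    show ?thesis using r unfolding m by (simp add: field_simps power_mult_distrib power_divide power_add f4)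
  qed
  also have "\<dots> \<le> real n * 8 ^ n * s / r ^ (n + 1)"
  proof -
    have "(2::real) ^ (n - 1) * 4 ^ n \<le> 2 ^ n * 4 ^ n" by (intro mult_right_mono power_increasing) auto
    also have "\<dots> = 8 ^ n" by (simp add: power_mult_distrib[symmetric])
    finally have "(2::real) ^ (n - 1) * 4 ^ n \<le> 8 ^ n" .
    then have "real n * s * (2 ^ (n - 1) * 4 ^ n) \<le> real n * s * 8 ^ n"
      using ab by (intro mult_left_mono) auto
    then show ?thesis using r by (intro divide_right_mono) (auto simp: mult_ac)
  qed
  finally show ?thesis .
qed



lemma onorm_pair_le:
  fixes L :: "('a::euclidean_space \<times> 'a) \<Rightarrow>\<^sub>L real"
  shows "onorm (blinfun_apply L) \<le> onorm (\<lambda>h. L (h, 0)) + onorm (\<lambda>h. L (0, h))"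
proof (rule onorm_le)
  fix x :: "'a \<times> 'a"
  obtain h k where x: "x = (h, k)" by (cases x)
  have bl1: "bounded_linear (\<lambda>h. L (h, 0))"
    by (rule bounded_linear_compose[OF blinfun.bounded_linear_right]) (simp add: bounded_linear_Pair bounded_linear_ident bounded_linear_zero)
  have bl2: "bounded_linear (\<lambda>h. L (0, h))"
    by (rule bounded_linear_compose[OF blinfun.bounded_linear_right]) (simp add: bounded_linear_Pair bounded_linear_ident bounded_linear_zero)
  have "L (h, k) = L (h, 0) + L (0, k)"
    by (metis add.right_neutral add_0 add_Pair blinfun.add_right)
  then have "norm (L x) \<le> norm (L (h, 0)) + norm (L (0, k))" using x by (simp add: norm_triangle_ineq)
  also have "norm (L (h, 0)) \<le> onorm (\<lambda>h. L (h, 0)) * norm h" using onorm[OF bl1] .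
  also have "\<dots> \<le> onorm (\<lambda>h. L (h, 0)) * norm x"
    using x onorm_pos_le[OF bl1] by (intro mult_left_mono) (auto simp: norm_fst_le)
  also have "norm (L (0, k)) \<le> onorm (\<lambda>h. L (0, h)) * norm k" using onorm[OF bl2] .
  also have "\<dots> \<le> onorm (\<lambda>h. L (0, h)) * norm x"
    using x onorm_pos_le[OF bl2] by (intro mult_left_mono) (auto simp: norm_snd_le)
  finally show "norm (L x) \<le> (onorm (\<lambda>h. L (h, 0)) + onorm (\<lambda>h. L (0, h))) * norm x"
    by (simp add: algebra_simps)
qed



lemma pointwise:
  fixes \<Omega> :: "'a::euclidean_space set" and K :: "'a \<Rightarrow> 'a \<Rightarrow> real"
    and D :: "'a \<times> 'a \<Rightarrow> ('a \<times> 'a) \<Rightarrow>\<^sub>L real" and \<Lambda> M :: real and z w \<xi> :: 'a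
  assumes conv: "convex \<Omega>"
    and Kb: "\<forall>x\<in>\<Omega>. \<forall>y. 0 < norm y \<and> norm y < 1 \<longrightarrow> \<bar>K x y\<bar> \<le> M"
    and Dd: "\<forall>p\<in>\<Omega> \<times> (ball 0 1 - {0}). ((\<lambda>q. K (fst q) (snd q)) has_derivative blinfun_apply (D p)) (at p)"
    and Db: "\<forall>x\<in>\<Omega>. \<forall>y. 0 < norm y \<and> norm y < 1 \<longrightarrow>
             onorm (\<lambda>h. D (x, y) (h, 0)) + onorm (\<lambda>h. D (x, y) (0, h)) \<le> \<Lambda> / norm y"
    and zp: "z + w /\<^sub>R 2 \<in> \<Omega>" and zm: "z - w /\<^sub>R 2 \<in> \<Omega>"
    and w0: "w \<noteq> 0" and xi: "2 * norm w \<le> norm \<xi>"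
  shows "\<bar>Kext K (z + w /\<^sub>R 2) (\<xi> + w /\<^sub>R 2) / norm (\<xi> + w /\<^sub>R 2) ^ DIM('a)
          - Kext K (z - w /\<^sub>R 2) (\<xi> - w /\<^sub>R 2) / norm (\<xi> - w /\<^sub>R 2) ^ DIM('a)\<bar>
      \<le> (4 * \<bar>\<Lambda>\<bar> + real DIM('a) * \<bar>M\<bar>) * 8 ^ DIM('a) * norm w / norm \<xi> ^ (DIM('a) + 1)
         + \<bar>M\<bar> * 4 ^ DIM('a) * indicator (ball 0 (min (1 + norm w / 2) (4/3)) - ball 0 (1 - norm w / 2)) \<xi>"
proof -
  define N where "N = DIM('a)"
  define s where "s = norm w"
  define r where "r = norm \<xi>"
  define xp xm yp ym where "xp = z + w /\<^sub>R 2" and "xm = z - w /\<^sub>R 2" and "yp = \<xi> + w /\<^sub>R 2" and "ym = \<xi> - w /\<^sub>R 2"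
  define Sh where "Sh = ball (0::'a) (min (1 + s / 2) (4/3)) - ball 0 (1 - s / 2)"
  define A where "A = (4 * \<bar>\<Lambda>\<bar> + real N * \<bar>M\<bar>) * 8 ^ N"
  define B where "B = \<bar>M\<bar> * 4 ^ N"
  have N1: "1 \<le> N" unfolding N_def using DIM_positive by (simp add: Suc_le_eq)
  have s0: "0 < s" using w0 s_def by simp
  have r0: "0 < r" using s0 xi unfolding r_def s_def by linarith
  have hs: "s \<le> r / 2" using xi r_def s_def by simp
  have nw2: "norm (w /\<^sub>R 2) = s / 2" using s_def by simp
  have ypb: "r - s/2 \<le> norm yp" "norm yp \<le> r + s/2"
    using norm_diff_ineq[of \<xi> "w /\<^sub>R 2"] norm_triangle_ineq[of \<xi> "w /\<^sub>R 2"] nw2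
    unfolding yp_def r_def by auto
  have ymb: "r - s/2 \<le> norm ym" "norm ym \<le> r + s/2"
    using norm_triangle_ineq2[of \<xi> "w /\<^sub>R 2"] norm_triangle_ineq4[of \<xi> "w /\<^sub>R 2"] nw2
    unfolding ym_def r_def by auto
  have ypym: "yp - ym = w" unfolding yp_def ym_def by (simp add: algebra_simps scaleR_2[symmetric] flip: scaleR_add_left)
  have xpxm: "xp - xm = w" unfolding xp_def xm_def by (simp add: algebra_simps scaleR_2[symmetric] flip: scaleR_add_left)
  have ab: "\<bar>norm yp - norm ym\<bar> \<le> s" using norm_triangle_ineq3[of yp ym] ypym s_def by simp
  have Bnn: "0 \<le> B" unfolding B_def by simp
  have Ann: "0 \<le> A" unfolding A_def by simp
  have ind_nn: "0 \<le> B * indicator Sh \<xi>" using Bnn by simp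
  have main_nn: "0 \<le> A * s / r ^ (N + 1)" using Ann s0 r0 by simp
  have goal: "\<bar>Kext K xp yp / norm yp ^ N - Kext K xm ym / norm ym ^ N\<bar> \<le> A * s / r ^ (N + 1) + B * indicator Sh \<xi>"
  proof (cases "norm yp < 1"; cases "norm ym < 1")
    assume yp1: "norm yp < 1" and ym1: "norm ym < 1"
    define Kp Km where "Kp = K xp yp" and "Km = K xm ym"
    have ext: "Kext K xp yp = Kp" "Kext K xm ym = Km" using yp1 ym1 by (simp_all add: Kext_def Kp_def Km_def)
    have apos: "0 < norm yp" "0 < norm ym" using ypb ymb hs r0 by auto
    have Kmb: "\<bar>Km\<bar> \<le> \<bar>M\<bar>" using Kb zm ym1 apos unfolding Km_def xm_def by force
    have KD: "\<bar>Kp - Km\<bar> \<le> (2 * \<bar>\<Lambda>\<bar> / r) * (2 * s)"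
    proof -
      define S where "S = closed_segment (xm, ym) (xp, yp)"
      have cb: "yp \<in> cball \<xi> (s/2)" "ym \<in> cball \<xi> (s/2)"
        unfolding yp_def ym_def using nw2 by (auto simp: dist_norm)
      have inS: "a \<in> \<Omega> \<and> b \<in> ball 0 1 \<and> r/2 \<le> norm b" if "(a, b) \<in> S" for a b
      proof -
        have seg: "a \<in> closed_segment xm xp" "b \<in> closed_segment ym yp"
          using closed_segment_PairD[of a b xm ym xp yp] that S_def by auto
        have "a \<in> \<Omega>" using closed_segment_subset[of xm \<Omega> xp] seg zp zm conv xp_def xm_def by auto
        moreover have "b \<in> ball 0 1" using closed_segment_subset[of ym "ball 0 1" yp] seg yp1 ym1 by auto
        moreover have "b \<in> cball \<xi> (s/2)" using closed_segment_subset[of ym "cball \<xi> (s/2)" yp] seg cb by auto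
        then have "r - s/2 \<le> norm b" using norm_triangle_ineq2[of \<xi> b] r_def by (auto simp: dist_norm)
        ultimately show ?thesis using hs s0 by auto
      qed
      have "norm ((\<lambda>q. K (fst q) (snd q)) (xp, yp) - (\<lambda>q. K (fst q) (snd q)) (xm, ym))
            \<le> (2 * \<bar>\<Lambda>\<bar> / r) * norm ((xp, yp) - (xm, ym))"
      proof (rule differentiable_bound[where f' = "\<lambda>q. blinfun_apply (D q)"])
        show "convex S" unfolding S_def by simp
        show "(xp, yp) \<in> S" "(xm, ym) \<in> S" unfolding S_def by auto
        fix q assume q: "q \<in> S"
        obtain a b where qab: "q = (a, b)" by (cases q)
        have ab': "a \<in> \<Omega>" "b \<in> ball 0 1" "r/2 \<le> norm b" using inS q qab by auto
        have b0: "0 < norm b" using ab' r0 by linarith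
        show "((\<lambda>q. K (fst q) (snd q)) has_derivative blinfun_apply (D q)) (at q within S)"
        proof (rule has_derivative_at_withinI)
          have "q \<in> \<Omega> \<times> (ball 0 1 - {0})" using ab' b0 qab by auto
          then show "((\<lambda>q. K (fst q) (snd q)) has_derivative blinfun_apply (D q)) (at q)"
            using Dd by blast
        qed
        have "onorm (blinfun_apply (D q)) \<le> onorm (\<lambda>h. D (a, b) (h, 0)) + onorm (\<lambda>h. D (a, b) (0, h))"
          using onorm_pair_le[of "D q"] qab by simp
        also have "\<dots> \<le> \<Lambda> / norm b"
        proof -
          have "norm b < 1" using ab' by simp
          then show ?thesis using Db ab'(1) b0 by blast
        qed
        also have "\<dots> \<le> \<bar>\<Lambda>\<bar> / norm b" using b0 by (simp add: divide_right_mono)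
        also have "\<dots> \<le> \<bar>\<Lambda>\<bar> / (r/2)" using ab' r0 b0 by (intro divide_left_mono mult_pos_pos) auto
        finally show "onorm (blinfun_apply (D q)) \<le> 2 * \<bar>\<Lambda>\<bar> / r" by (simp add: mult.commute)
      qed
      moreover have "norm ((xp, yp) - (xm, ym)) \<le> 2 * s"
        using norm_Pair_le[of w w] xpxm ypym s_def by simp
      ultimately have "\<bar>Kp - Km\<bar> \<le> (2 * \<bar>\<Lambda>\<bar> / r) * norm ((xp, yp) - (xm, ym))"
        unfolding Kp_def Km_def by simp
      also have "\<dots> \<le> (2 * \<bar>\<Lambda>\<bar> / r) * (2 * s)"
        using \<open>norm ((xp, yp) - (xm, ym)) \<le> 2 * s\<close> r0 by (intro mult_left_mono) auto
      finally show ?thesis .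
    qed
    have ar: "r/2 \<le> norm yp" "norm yp \<le> 2*r" "r/2 \<le> norm ym" "norm ym \<le> 2*r"
      using ypb ymb hs s0 by auto
    have split: "Kext K xp yp / norm yp ^ N - Kext K xm ym / norm ym ^ N
        = (Kp - Km) / norm yp ^ N + Km * (1 / norm yp ^ N - 1 / norm ym ^ N)"
      using apos unfolding ext by (simp add: field_simps)
    have b1: "\<bar>(Kp - Km) / norm yp ^ N\<bar> \<le> 4 * \<bar>\<Lambda>\<bar> * 8 ^ N * s / r ^ (N + 1)"
    proof -
      have "\<bar>(Kp - Km) / norm yp ^ N\<bar> = \<bar>Kp - Km\<bar> / norm yp ^ N" by (simp add: abs_div)
      also have "\<dots> \<le> ((2 * \<bar>\<Lambda>\<bar> / r) * (2 * s)) / norm yp ^ N"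
        using KD apos by (intro divide_right_mono) auto
      also have "\<dots> \<le> ((2 * \<bar>\<Lambda>\<bar> / r) * (2 * s)) / (r/2) ^ N"
        using ar r0 s0 by (intro divide_left_mono power_mono mult_pos_pos zero_less_power) auto
      also have "\<dots> = 4 * \<bar>\<Lambda>\<bar> * 2 ^ N * s / r ^ (N + 1)"
        using r0 by (simp add: field_simps power_divide)
      also have "\<dots> \<le> 4 * \<bar>\<Lambda>\<bar> * 8 ^ N * s / r ^ (N + 1)"
        using r0 s0 by (intro divide_right_mono mult_right_mono mult_left_mono power_mono) auto
      finally show ?thesis .
    qed
    have b2: "\<bar>Km * (1 / norm yp ^ N - 1 / norm ym ^ N)\<bar> \<le> \<bar>M\<bar> * (real N * 8 ^ N * s / r ^ (N + 1))"
      unfolding abs_mult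
      by (intro mult_mono Kmb inv_pow_diff[OF r0 ar ab N1]) auto
    have "\<bar>Kext K xp yp / norm yp ^ N - Kext K xm ym / norm ym ^ N\<bar>
        \<le> \<bar>(Kp - Km) / norm yp ^ N\<bar> + \<bar>Km * (1 / norm yp ^ N - 1 / norm ym ^ N)\<bar>"
      unfolding split by (rule abs_triangle_ineq)
    also have "\<dots> \<le> 4 * \<bar>\<Lambda>\<bar> * 8 ^ N * s / r ^ (N + 1) + \<bar>M\<bar> * (real N * 8 ^ N * s / r ^ (N + 1))"
      using b1 b2 by linarith
    also have "\<dots> = A * s / r ^ (N + 1)" unfolding A_def by (simp add: algebra_simps add_divide_distrib)
    finally show ?thesis using ind_nn by linarith
  next
    assume yp1: "norm yp < 1" and ym1: "\<not> norm ym < 1"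
    have r1: "1 - s/2 \<le> r" "r < 1 + s/2" using ypb ymb yp1 ym1 by auto
    have inSh: "\<xi> \<in> Sh" unfolding Sh_def using r1 hs r_def by auto
    have a14: "1/4 \<le> norm yp" using ypb r1 hs by auto
    have "\<bar>Kext K xp yp / norm yp ^ N - Kext K xm ym / norm ym ^ N\<bar> = \<bar>K xp yp\<bar> / norm yp ^ N"
      using yp1 ym1 by (simp add: Kext_def abs_div)
    also have "\<dots> \<le> \<bar>M\<bar> / norm yp ^ N"
    proof (rule divide_right_mono)
      have "0 < norm yp" using a14 by linarith
      then have "\<bar>K xp yp\<bar> \<le> M" using Kb zp yp1 unfolding xp_def by blast
      then show "\<bar>K xp yp\<bar> \<le> \<bar>M\<bar>" by linarith
    qed simp
    also have "\<dots> \<le> \<bar>M\<bar> / (1/4) ^ N"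
      using a14 by (intro divide_left_mono power_mono mult_pos_pos zero_less_power) auto
    also have "\<dots> = B * indicator Sh \<xi>" using inSh unfolding B_def by (simp add: power_divide)
    finally show ?thesis using main_nn by linarith
  next
    assume yp1: "\<not> norm yp < 1" and ym1: "norm ym < 1"
    have r1: "1 - s/2 \<le> r" "r < 1 + s/2" using ypb ymb yp1 ym1 by auto
    have inSh: "\<xi> \<in> Sh" unfolding Sh_def using r1 hs r_def by auto
    have a14: "1/4 \<le> norm ym" using ymb r1 hs by auto
    have "\<bar>Kext K xp yp / norm yp ^ N - Kext K xm ym / norm ym ^ N\<bar> = \<bar>K xm ym\<bar> / norm ym ^ N"
      using yp1 ym1 by (simp add: Kext_def abs_div)
    also have "\<dots> \<le> \<bar>M\<bar> / norm ym ^ N"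
    proof (rule divide_right_mono)
      have "0 < norm ym" using a14 by linarith
      then have "\<bar>K xm ym\<bar> \<le> M" using Kb zm ym1 unfolding xm_def by blast
      then show "\<bar>K xm ym\<bar> \<le> \<bar>M\<bar>" by linarith
    qed simp
    also have "\<dots> \<le> \<bar>M\<bar> / (1/4) ^ N"
      using a14 by (intro divide_left_mono power_mono mult_pos_pos zero_less_power) auto
    also have "\<dots> = B * indicator Sh \<xi>" using inSh unfolding B_def by (simp add: power_divide)
    finally show ?thesis using main_nn by linarith
  next
    assume yp1: "\<not> norm yp < 1" and ym1: "\<not> norm ym < 1"
    then have "Kext K xp yp = 0" "Kext K xm ym = 0" by (simp_all add: Kext_def)
    then show ?thesis using ind_nn main_nn by simp
  qed
  then show ?thesis unfolding N_def s_def r_def xp_def xm_def yp_def ym_def A_def B_def Sh_def by simp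
qed



lemma shell_measure:
  fixes s :: real
  assumes s0: "0 < s"
  shows "emeasure lborel (ball (0::'a::euclidean_space) (min (1 + s / 2) (4/3)) - ball 0 (1 - s / 2))
     \<le> ennreal (9 * unit_ball_vol (real DIM('a)) * real DIM('a) * 2 ^ DIM('a) * ell s)"
proof -
  define V where "V = unit_ball_vol (real DIM('a))"
  define N where "N = DIM('a)"
  have V0: "0 < V" unfolding V_def by simp
  have N1: "1 \<le> N" unfolding N_def using DIM_positive by (simp add: Suc_le_eq)
  let ?Sh = "ball (0::'a) (min (1 + s / 2) (4/3)) - ball 0 (1 - s / 2)"
  show ?thesis
  proof (cases "s \<le> 1/10")
    case True
    have "emeasure lborel ?Sh \<le> emeasure lborel (ball (0::'a) (1 + s/2) - ball 0 (1 - s/2))"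
      by (intro emeasure_mono) auto
    also have "\<dots> = emeasure lborel (ball (0::'a) (1 + s/2)) - emeasure lborel (ball (0::'a) (1 - s/2))"
    proof (rule emeasure_Diff)
      show "emeasure lborel (ball (0::'a) (1 - s/2)) \<noteq> \<infinity>"
        using emeasure_lborel_ball_finite[of "0::'a" "1 - s/2"] by (simp add: less_top)
      show "ball (0::'a) (1 - s/2) \<in> sets lborel" "ball (0::'a) (1 + s/2) \<in> sets lborel" by simp_all
      show "ball (0::'a) (1 - s/2) \<subseteq> ball 0 (1 + s/2)" using s0 by auto
    qed
    also have "\<dots> = ennreal (V * (1 + s/2) ^ N) - ennreal (V * (1 - s/2) ^ N)"
      using True s0 unfolding V_def N_def by (simp add: emeasure_ball)
    also have "\<dots> = ennreal (V * (1 + s/2) ^ N - V * (1 - s/2) ^ N)"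
      using True V0 by (intro ennreal_minus) auto
    also have "\<dots> \<le> ennreal (9 * V * real N * 2 ^ N * ell s)"
    proof (rule ennreal_leI)
    have "V * (1 + s/2) ^ N - V * (1 - s/2) ^ N \<le> V * (real N * s * 2 ^ N)"
    proof -
      have "(1 + s/2) ^ N - (1 - s/2) ^ N \<le> real N * ((1 + s/2) - (1 - s/2)) * 2 ^ (N - 1)"
        using True s0 by (intro pow_diff_le) auto
      also have "\<dots> \<le> real N * s * 2 ^ N"
      proof -
        have eq: "(1 + s/2 - (1 - s/2)) = s" by simp
        have "(2::real) ^ (N - 1) \<le> 2 ^ N" by (intro power_increasing) auto
        then have "real N * s * 2 ^ (N - 1) \<le> real N * s * 2 ^ N"
          by (rule mult_left_mono) (use s0 in simp)
        then show ?thesis by (simp only: eq)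
      qed
      finally have "(1 + s/2) ^ N - (1 - s/2) ^ N \<le> real N * s * 2 ^ N" .
      then have "V * ((1 + s/2) ^ N - (1 - s/2) ^ N) \<le> V * (real N * s * 2 ^ N)"
        by (rule mult_left_mono) (use V0 in simp)
      then show ?thesis by (simp add: right_diff_distrib)
    qed
    also have "V * (real N * s * 2 ^ N) \<le> 9 * V * real N * 2 ^ N * ell s"
    proof -
      have "s \<le> 9 * ell s" using ell_lin[OF s0 True] ell_nonneg[of s] by linarith
      then have "V * real N * 2 ^ N * s \<le> V * real N * 2 ^ N * (9 * ell s)"
        by (rule mult_left_mono) (use V0 in simp)
      then show ?thesis by (simp only: mult.assoc mult.commute mult.left_commute)
    qed
    finally show "V * (1 + s/2) ^ N - V * (1 - s/2) ^ N \<le> 9 * V * real N * 2 ^ N * ell s" .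
    qed
    finally show ?thesis unfolding V_def N_def .
  next
    case False
    have "emeasure lborel ?Sh \<le> emeasure lborel (ball (0::'a) (4/3))"
      by (intro emeasure_mono) auto
    also have "\<dots> = ennreal (V * (4/3) ^ N)" unfolding V_def N_def by (simp add: emeasure_ball)
    also have "\<dots> \<le> ennreal (9 * V * real N * 2 ^ N * ell s)"
    proof (rule ennreal_leI)
      have e: "ell s = 1 / ln 10" using False by (intro ell_big) auto
      have l9: "ln (10::real) \<le> 9" using ln_le_minus_one[of 10] by simp
      have p: "(4/3::real) ^ N \<le> 2 ^ N" by (rule power_mono) auto
      have q: "1 \<le> 9 / ln (10::real)" using l9 ln10_gt2 by simp
      have r: "(1::real) \<le> real N" using N1 by simp
      have "(4/3::real) ^ N * 1 * 1 \<le> 2 ^ N * real N * (9 / ln 10)"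
        by (rule mult_mono[OF mult_mono[OF p r]]) (use q in auto)
      then have "V * ((4/3::real) ^ N) \<le> V * (2 ^ N * real N * (9 / ln 10))"
        by (intro mult_left_mono) (use V0 in auto)
      then show "V * (4/3) ^ N \<le> 9 * V * real N * 2 ^ N * ell s"
        unfolding e by (simp add: field_simps)
    qed
    finally show ?thesis unfolding V_def N_def .
  qed
qed



lemma dyadic_cover:
  fixes r a :: real
  assumes a0: "0 < a" and ra: "a \<le> r"
  shows "\<exists>k::nat. 4 ^ k * a \<le> r \<and> r < 4 ^ (k + 1) * a"
proof -
  obtain n where n: "r / a < 4 ^ n" using real_arch_pow[of 4 "r / a"] by auto
  then have h: "r < 4 ^ n * a" using a0 by (simp add: divide_less_eq)
  have "(4::real) ^ n * a \<le> 4 ^ (n + 1) * a" using a0 by simp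
  then have ex: "\<exists>k. r < 4 ^ (k + 1) * a" using h by (intro exI[of _ n]) linarith
  define k where "k = (LEAST k. r < 4 ^ (k + 1) * a)"
  have k1: "r < 4 ^ (k + 1) * a" unfolding k_def using LeastI_ex[OF ex] .
  have k2: "4 ^ k * a \<le> r"
  proof (cases k)
    case 0 then show ?thesis using ra by simp
  next
    case (Suc j)
    then have "j < k" by simp
    then have "\<not> r < 4 ^ (j + 1) * a" unfolding k_def by (rule not_less_Least)
    then show ?thesis using Suc by simp
  qed
  show ?thesis using k1 k2 by blast
qed

lemma dyadic_point:
  fixes s A r :: real and k :: nat and N :: nat
  assumes s0: "0 < s" and A0: "0 \<le> A" and k1: "4 ^ k * (2 * s) \<le> r" and k2: "r < 4 ^ (k + 1) * (2 * s)"
  shows "A * s / r ^ (N + 1) * ell r \<le> A * s / (4 ^ k * (2 * s)) ^ (N + 1) * (2 * ell s * 2 ^ (k + 2))"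
proof (rule mult_mono)
  have p: "0 < 4 ^ k * (2 * s)" using s0 by simp
  show "A * s / r ^ (N + 1) \<le> A * s / (4 ^ k * (2 * s)) ^ (N + 1)"
  proof -
    have r0: "0 < r" using p k1 by linarith
    show ?thesis using p k1 s0 A0 r0 by (intro divide_left_mono power_mono mult_pos_pos zero_less_power) auto
  qed
  have rs: "s \<le> r" using k1 s0
    by (smt (verit) mult_le_cancel_right1 one_le_power)
  have "ell r \<le> 2 * ell s * sqrt (r / s)" using ell_sqrt[OF s0 rs] .
  also have "sqrt (r / s) \<le> 2 ^ (k + 2)"
  proof -
    have "r / s < 4 ^ (k + 1) * 2" using k2 s0 by (simp add: divide_less_eq mult_ac)
    also have "(4::real) ^ (k + 1) * 2 \<le> (2 ^ (k + 2)) ^ 2"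
    proof -
      have "((2::real) ^ (k + 2)) ^ 2 = 4 ^ (k + 2)" by (simp add: power2_eq_square power_mult_distrib[symmetric])
      moreover have "(4::real) ^ (k + 1) * 2 \<le> 4 ^ (k + 2)" by simp
      ultimately show ?thesis by simp
    qed
    finally have "r / s \<le> (2 ^ (k + 2)) ^ 2" by simp
    then have "sqrt (r / s) \<le> sqrt ((2 ^ (k + 2)) ^ 2)" by (rule real_sqrt_le_mono)
    moreover have "sqrt (((2::real) ^ (k+2))^2) = 2^(k+2)" using real_sqrt_abs[of "(2::real)^(k+2)"] by simp
    ultimately show ?thesis by linarith
  qed
  then have "2 * ell s * sqrt (r / s) \<le> 2 * ell s * 2 ^ (k + 2)"
    by (rule mult_left_mono) (use ell_nonneg[of s] in simp)
  finally show "ell r \<le> 2 * ell s * 2 ^ (k + 2)" .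
  show "0 \<le> A * s / (4 ^ k * (2 * s)) ^ (N + 1)" using A0 s0 by simp
  show "0 \<le> ell r" by (rule ell_nonneg)
qed

lemma dyadic_term:
  fixes s A V :: real and k N :: nat
  assumes s0: "0 < s"
  shows "A * s / (4 ^ k * (2 * s)) ^ (N + 1) * (2 * ell s * 2 ^ (k + 2)) * (V * (4 ^ (k + 1) * (2 * s)) ^ N)
       = 4 * 4 ^ N * A * V * ell s * (1/2) ^ k"
proof -
  define X where "X = 4 ^ k * (2 * s)"
  have X0: "0 < X" unfolding X_def using s0 by simp
  have e1: "(4::real) ^ (k + 1) * (2 * s) = 4 * X" unfolding X_def by simp
  have e2: "(4::real) ^ k = 2 ^ k * 2 ^ k" by (simp add: power_mult_distrib[symmetric])
  have "A * s / X ^ (N + 1) * (2 * ell s * 2 ^ (k + 2)) * (V * (4 * X) ^ N)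
      = A * s * (2 * ell s * 2 ^ (k + 2)) * V * 4 ^ N / X"
    using X0 by (simp add: power_mult_distrib field_simps)
  also have "\<dots> = 4 * 4 ^ N * A * V * ell s * (1/2) ^ k"
    unfolding X_def using s0 by (simp add: e2 field_simps power_one_over)
  finally have "A * s / X ^ (N + 1) * (2 * ell s * 2 ^ (k + 2)) * (V * (4 * X) ^ N) = 4 * 4 ^ N * A * V * ell s * (1/2) ^ k" .
  then show ?thesis by (simp only: e1 X_def[symmetric])
qed



lemma ennreal_le_suminf: "f k \<le> (\<Sum>i. f i :: ennreal)"
  using ennreal_suminf_lessD[of f "f k" k] by (metis not_le order_less_irrefl)

lemma integral_bound:
  fixes F :: "'a::euclidean_space \<Rightarrow> real" and s A B :: real
  assumes s0: "0 < s" and A0: "0 \<le> A" and B0: "0 \<le> B"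
    and Fb: "\<And>\<xi>. 2 * s \<le> norm \<xi> \<Longrightarrow> F \<xi> \<le> A * s / norm \<xi> ^ (DIM('a) + 1)
            + B * indicator (ball 0 (min (1 + s / 2) (4/3)) - ball 0 (1 - s / 2)) \<xi>"
  shows "(\<integral>\<^sup>+\<xi>. ennreal (F \<xi> * ell (norm \<xi>)) * indicator (- ball 0 (2 * s)) \<xi> \<partial>lborel)
     \<le> ennreal ((8 * 4 ^ DIM('a) * A * unit_ball_vol (real DIM('a))
          + B * (9 * unit_ball_vol (real DIM('a)) * real DIM('a) * 2 ^ DIM('a))) * ell s)"
proof -
  define N where "N = DIM('a)"
  define V where "V = unit_ball_vol (real DIM('a))"
  have V0: "0 < V" unfolding V_def by simp
  define Sh where "Sh = ball (0::'a) (min (1 + s / 2) (4/3)) - ball 0 (1 - s / 2)"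
  define S where "S k = ball (0::'a) (4 ^ (k + 1) * (2 * s)) - ball 0 (4 ^ k * (2 * s))" for k :: nat
  define c where "c k = A * s / (4 ^ k * (2 * s)) ^ (N + 1) * (2 * ell s * 2 ^ (k + 2))" for k :: nat
  have c0: "0 \<le> c k" for k unfolding c_def using A0 s0 ell_nonneg[of s] by simp
  have Ssets: "S k \<in> sets lborel" for k unfolding S_def by (intro sets.Diff) simp_all
  have Shsets: "Sh \<in> sets lborel" unfolding Sh_def by (intro sets.Diff) simp_all
  define G1 where "G1 \<xi> = (\<Sum>k. ennreal (c k) * indicator (S k) \<xi>)" for \<xi>
  define G2 where "G2 \<xi> = ennreal B * indicator Sh \<xi>" for \<xi>
  have mG1i: "(\<lambda>\<xi>. ennreal (c k) * indicator (S k) \<xi>) \<in> borel_measurable lborel" for k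
    using Ssets[of k] by measurable
  have mG1: "G1 \<in> borel_measurable lborel" unfolding G1_def
    by (rule borel_measurable_suminf_order) (rule mG1i)
  have mG2: "G2 \<in> borel_measurable lborel" unfolding G2_def using Shsets by measurable
  have pw: "ennreal (F \<xi> * ell (norm \<xi>)) * indicator (- ball 0 (2 * s)) \<xi> \<le> G1 \<xi> + G2 \<xi>" for \<xi>
  proof (cases "\<xi> \<in> ball 0 (2 * s)")
    case True then show ?thesis by simp
  next
    case False
    then have r2: "2 * s \<le> norm \<xi>" by (simp add: not_less)
    obtain k where k1: "4 ^ k * (2 * s) \<le> norm \<xi>" and k2: "norm \<xi> < 4 ^ (k + 1) * (2 * s)"
      using dyadic_cover[of "2 * s" "norm \<xi>"] s0 r2 by auto
    have inS: "\<xi> \<in> S k" unfolding S_def using k1 k2 by auto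
    have ellb: "0 \<le> ell (norm \<xi>)" "ell (norm \<xi>) \<le> 1" using ell_nonneg ell_le_half[of "norm \<xi>"] by auto
    have ind: "(0::real) \<le> indicator Sh \<xi>" "indicator Sh \<xi> \<le> (1::real)" by (simp_all add: indicator_def)
    have "F \<xi> * ell (norm \<xi>) \<le> (A * s / norm \<xi> ^ (N + 1) + B * indicator Sh \<xi>) * ell (norm \<xi>)"
      using Fb[OF r2] ellb unfolding N_def Sh_def by (intro mult_right_mono) auto
    also have "\<dots> = A * s / norm \<xi> ^ (N + 1) * ell (norm \<xi>) + B * indicator Sh \<xi> * ell (norm \<xi>)"
      by (simp add: algebra_simps)
    also have "A * s / norm \<xi> ^ (N + 1) * ell (norm \<xi>) \<le> c k"
      unfolding c_def using dyadic_point[OF s0 A0 k1 k2] .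
    also have "B * indicator Sh \<xi> * ell (norm \<xi>) \<le> B * indicator Sh \<xi>"
      using B0 ind ellb by (simp add: mult_left_le)
    finally have le: "F \<xi> * ell (norm \<xi>) \<le> c k + B * indicator Sh \<xi>" by simp
    have "ennreal (F \<xi> * ell (norm \<xi>)) * indicator (- ball 0 (2 * s)) \<xi> = ennreal (F \<xi> * ell (norm \<xi>))"
      using False by simp
    also have "\<dots> \<le> ennreal (c k + B * indicator Sh \<xi>)" using le by (rule ennreal_leI)
    also have "\<dots> = ennreal (c k) + ennreal (B * indicator Sh \<xi>)"
      using c0 B0 ind by (intro ennreal_plus) auto
    also have "ennreal (B * indicator Sh \<xi>) = G2 \<xi>" unfolding G2_def by (simp add: indicator_def)
    also have "ennreal (c k) = ennreal (c k) * indicator (S k) \<xi>" using inS by simp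
    also have "\<dots> \<le> G1 \<xi>" unfolding G1_def by (rule ennreal_le_suminf)
    finally show ?thesis by (simp add: add_right_mono)
  qed
  have I1: "integral\<^sup>N lborel G1 \<le> ennreal (8 * 4 ^ N * A * V * ell s)"
  proof -
    have "integral\<^sup>N lborel G1 = (\<Sum>k. \<integral>\<^sup>+\<xi>. ennreal (c k) * indicator (S k) \<xi> \<partial>lborel)"
      unfolding G1_def by (rule nn_integral_suminf[OF mG1i])
    also have "\<dots> = (\<Sum>k. ennreal (c k) * emeasure lborel (S k))"
      by (rule suminf_cong) (rule nn_integral_cmult_indicator[OF Ssets])
    also have "\<dots> \<le> (\<Sum>k. ennreal (4 * 4 ^ N * A * V * ell s * (1/2) ^ k))"
    proof (rule suminf_le)
      fix k
      have "emeasure lborel (S k) \<le> emeasure lborel (ball (0::'a) (4 ^ (k + 1) * (2 * s)))"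
        unfolding S_def by (intro emeasure_mono) auto
      also have "\<dots> = ennreal (V * (4 ^ (k + 1) * (2 * s)) ^ N)"
        unfolding V_def N_def using s0 by (simp add: emeasure_ball)
      finally have "ennreal (c k) * emeasure lborel (S k) \<le> ennreal (c k) * ennreal (V * (4 ^ (k + 1) * (2 * s)) ^ N)"
        by (rule mult_left_mono) simp
      also have "\<dots> = ennreal (c k * (V * (4 ^ (k + 1) * (2 * s)) ^ N))"
        using c0 V0 s0 by (simp add: ennreal_mult)
      also have "c k * (V * (4 ^ (k + 1) * (2 * s)) ^ N) = 4 * 4 ^ N * A * V * ell s * (1/2) ^ k"
        unfolding c_def using dyadic_term[OF s0] by simp
      finally show "ennreal (c k) * emeasure lborel (S k) \<le> ennreal (4 * 4 ^ N * A * V * ell s * (1/2) ^ k)" .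
    qed auto
    also have "\<dots> = ennreal (\<Sum>k. 4 * 4 ^ N * A * V * ell s * (1/2) ^ k)"
      using A0 V0 ell_nonneg[of s]
      by (intro suminf_ennreal2 summable_mult summable_geometric) auto
    also have "(\<Sum>k. 4 * 4 ^ N * A * V * ell s * (1/2::real) ^ k) = 8 * 4 ^ N * A * V * ell s"
      using suminf_mult[OF summable_geometric[of "1/2::real"], of "4 * 4 ^ N * A * V * ell s"]
        suminf_geometric[of "1/2::real"] by simp
    finally show ?thesis .
  qed
  have I2: "integral\<^sup>N lborel G2 \<le> ennreal (B * (9 * V * real N * 2 ^ N * ell s))"
  proof -
    have "integral\<^sup>N lborel G2 = ennreal B * emeasure lborel Sh"
      unfolding G2_def by (rule nn_integral_cmult_indicator[OF Shsets])
    also have "\<dots> \<le> ennreal B * ennreal (9 * V * real N * 2 ^ N * ell s)"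
      using shell_measure[OF s0] unfolding Sh_def V_def N_def by (rule mult_left_mono) simp
    also have "\<dots> = ennreal (B * (9 * V * real N * 2 ^ N * ell s))"
      using B0 V0 ell_nonneg[of s] by (simp add: ennreal_mult)
    finally show ?thesis .
  qed
  have "(\<integral>\<^sup>+\<xi>. ennreal (F \<xi> * ell (norm \<xi>)) * indicator (- ball 0 (2 * s)) \<xi> \<partial>lborel)
      \<le> (\<integral>\<^sup>+\<xi>. G1 \<xi> + G2 \<xi> \<partial>lborel)" by (intro nn_integral_mono pw)
  also have "\<dots> = integral\<^sup>N lborel G1 + integral\<^sup>N lborel G2" using mG1 mG2 by (rule nn_integral_add)
  also have "\<dots> \<le> ennreal (8 * 4 ^ N * A * V * ell s) + ennreal (B * (9 * V * real N * 2 ^ N * ell s))"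
    using I1 I2 by (rule add_mono)
  also have "\<dots> = ennreal ((8 * 4 ^ N * A * V + B * (9 * V * real N * 2 ^ N)) * ell s)"
  proof -
    have "ennreal (8 * 4 ^ N * A * V * ell s) + ennreal (B * (9 * V * real N * 2 ^ N * ell s))
       = ennreal (8 * 4 ^ N * A * V * ell s + B * (9 * V * real N * 2 ^ N * ell s))"
      using A0 B0 V0 ell_nonneg[of s] by (intro ennreal_plus[symmetric]) auto
    also have "8 * 4 ^ N * A * V * ell s + B * (9 * V * real N * 2 ^ N * ell s)
       = (8 * 4 ^ N * A * V + B * (9 * V * real N * 2 ^ N)) * ell s" by (simp add: algebra_simps)
    finally show ?thesis .
  qed
  finally show ?thesis unfolding N_def V_def .
qed



theorem lemma3p6:
  fixes \<Lambda> M :: real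
  shows "\<exists>\<Lambda>0. \<forall>(\<Omega> :: 'a::euclidean_space set) (K :: 'a \<Rightarrow> 'a \<Rightarrow> real).
    open \<Omega> \<and> convex \<Omega>
    \<and> (\<forall>x\<in>\<Omega>. \<forall>y. 0 < norm y \<and> norm y < 1 \<longrightarrow> \<bar>K x y\<bar> \<le> M)
    \<and> (\<exists>D :: 'a \<times> 'a \<Rightarrow> ('a \<times> 'a) \<Rightarrow>\<^sub>L real.
          (\<forall>p\<in>\<Omega> \<times> (ball 0 1 - {0}).
             ((\<lambda>q. K (fst q) (snd q)) has_derivative blinfun_apply (D p)) (at p))
        \<and> continuous_on (\<Omega> \<times> (ball 0 1 - {0})) D
        \<and> (\<forall>x\<in>\<Omega>. \<forall>y. 0 < norm y \<and> norm y < 1 \<longrightarrow>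
             onorm (\<lambda>h. D (x, y) (h, 0)) + onorm (\<lambda>h. D (x, y) (0, h)) \<le> \<Lambda> / norm y))
    \<longrightarrow> alpha_regular \<Omega> K 1 \<Lambda>0"
proof -
  define N where "N = DIM('a)"
  define V where "V = unit_ball_vol (real DIM('a))"
  define A where "A = (4 * \<bar>\<Lambda>\<bar> + real N * \<bar>M\<bar>) * 8 ^ N"
  define B where "B = \<bar>M\<bar> * 4 ^ N"
  define L0 where "L0 = 8 * 4 ^ N * A * V + B * (9 * V * real N * 2 ^ N)"
  have A0: "0 \<le> A" unfolding A_def by simp
  have B0: "0 \<le> B" unfolding B_def by simp
  show ?thesis
  proof (intro exI[of _ L0] allI impI)
    fix \<Omega> :: "'a set" and K :: "'a \<Rightarrow> 'a \<Rightarrow> real"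
    assume H: "open \<Omega> \<and> convex \<Omega>
    \<and> (\<forall>x\<in>\<Omega>. \<forall>y. 0 < norm y \<and> norm y < 1 \<longrightarrow> \<bar>K x y\<bar> \<le> M)
    \<and> (\<exists>D :: 'a \<times> 'a \<Rightarrow> ('a \<times> 'a) \<Rightarrow>\<^sub>L real.
          (\<forall>p\<in>\<Omega> \<times> (ball 0 1 - {0}).
             ((\<lambda>q. K (fst q) (snd q)) has_derivative blinfun_apply (D p)) (at p))
        \<and> continuous_on (\<Omega> \<times> (ball 0 1 - {0})) D
        \<and> (\<forall>x\<in>\<Omega>. \<forall>y. 0 < norm y \<and> norm y < 1 \<longrightarrow>
             onorm (\<lambda>h. D (x, y) (h, 0)) + onorm (\<lambda>h. D (x, y) (0, h)) \<le> \<Lambda> / norm y))"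
    then have conv: "convex \<Omega>" and Kb: "\<forall>x\<in>\<Omega>. \<forall>y. 0 < norm y \<and> norm y < 1 \<longrightarrow> \<bar>K x y\<bar> \<le> M"
      by auto
    from H obtain D :: "'a \<times> 'a \<Rightarrow> ('a \<times> 'a) \<Rightarrow>\<^sub>L real" where
      Dd: "\<forall>p\<in>\<Omega> \<times> (ball 0 1 - {0}). ((\<lambda>q. K (fst q) (snd q)) has_derivative blinfun_apply (D p)) (at p)"
      and Db: "\<forall>x\<in>\<Omega>. \<forall>y. 0 < norm y \<and> norm y < 1 \<longrightarrow>
             onorm (\<lambda>h. D (x, y) (h, 0)) + onorm (\<lambda>h. D (x, y) (0, h)) \<le> \<Lambda> / norm y"
      by blast
    show "alpha_regular \<Omega> K 1 L0"
      unfolding alpha_regular_def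
    proof (intro allI impI)
      fix z w :: 'a
      assume zw: "z + w /\<^sub>R 2 \<in> \<Omega> \<and> z - w /\<^sub>R 2 \<in> \<Omega>"
      show "(\<integral>\<^sup>+ \<xi> \<in> - ball 0 (2 * norm w).
          ennreal (\<bar>Kext K (z + w /\<^sub>R 2) (\<xi> + w /\<^sub>R 2) / norm (\<xi> + w /\<^sub>R 2) ^ DIM('a)
                  - Kext K (z - w /\<^sub>R 2) (\<xi> - w /\<^sub>R 2) / norm (\<xi> - w /\<^sub>R 2) ^ DIM('a)\<bar>
                  * ell (norm \<xi>)) \<partial>lborel)
           \<le> ennreal (L0 * ell (norm w) powr 1)"
      proof (cases "w = 0")
        case True then show ?thesis by simp
      next
        case False
        have s0: "0 < norm w" using False by simp
        have "(\<integral>\<^sup>+ \<xi> \<in> - ball 0 (2 * norm w).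
          ennreal (\<bar>Kext K (z + w /\<^sub>R 2) (\<xi> + w /\<^sub>R 2) / norm (\<xi> + w /\<^sub>R 2) ^ DIM('a)
                  - Kext K (z - w /\<^sub>R 2) (\<xi> - w /\<^sub>R 2) / norm (\<xi> - w /\<^sub>R 2) ^ DIM('a)\<bar>
                  * ell (norm \<xi>)) \<partial>lborel)
           \<le> ennreal ((8 * 4 ^ DIM('a) * A * unit_ball_vol (real DIM('a))
          + B * (9 * unit_ball_vol (real DIM('a)) * real DIM('a) * 2 ^ DIM('a))) * ell (norm w))"
        proof (rule integral_bound[OF s0 A0 B0])
          fix \<xi> :: 'a
          assume xi: "2 * norm w \<le> norm \<xi>"
          show "\<bar>Kext K (z + w /\<^sub>R 2) (\<xi> + w /\<^sub>R 2) / norm (\<xi> + w /\<^sub>R 2) ^ DIM('a)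
                  - Kext K (z - w /\<^sub>R 2) (\<xi> - w /\<^sub>R 2) / norm (\<xi> - w /\<^sub>R 2) ^ DIM('a)\<bar>
              \<le> A * norm w / norm \<xi> ^ (DIM('a) + 1)
              + B * indicator (ball 0 (min (1 + norm w / 2) (4/3)) - ball 0 (1 - norm w / 2)) \<xi>"
            using pointwise[OF conv Kb Dd Db conjunct1[OF zw] conjunct2[OF zw] False xi]
            unfolding A_def B_def N_def by simp
        qed
        also have "\<dots> = ennreal (L0 * ell (norm w) powr 1)"
          using ell_nonneg[of "norm w"] unfolding L0_def N_def V_def by simp
        finally show ?thesis .
      qed
    qed
  qed
qed

end
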